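(* Let $H^2=H^2(\mathbb{D})$ be the Hardy space on the open unit disc. The differentiation operator $D:f\mapsto f'$ with domain $\mathcal{E}=\{f\in H^2: f'\in H^2\}$ is frequently hypercyclic on $H^2$.
   Context: A (possibly unbounded) densely defined operator $T$ in $X$ is frequently hypercyclic if there is $f\in D(T)$ with $T^nf\in D(T)$ for all $n\ge1$ such that for every non-empty open $U\subset X$ the set $\{n\in\mathbb{N}: T^nf\in U\}$ has positive lower density, where the lower density of $E\subset\mathbb{N}$ is $\liminf_{N\to\infty}\#(E\cap\{1,\dots,N\})/N$. *)

theory Defs
  imports "HOL-Analysis.Analysis" "HOL-Library.Liminf_Limsup"
begin

text \<open>Elements of the Hardy space are represented as functions on the complex plane
  that are holomorphic on the open unit disc and vanish outside it (so that each
  element of the space has a unique representative).\<close>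

definition taylor_coeff :: "(complex \<Rightarrow> complex) \<Rightarrow> nat \<Rightarrow> complex" where
  "taylor_coeff f n = (deriv ^^ n) f 0 / of_nat (fact n)"

definition H2 :: "(complex \<Rightarrow> complex) set" where
  "H2 = {f. f holomorphic_on ball 0 1 \<and> (\<forall>z. z \<notin> ball 0 1 \<longrightarrow> f z = 0)
            \<and> summable (\<lambda>n. (cmod (taylor_coeff f n))\<^sup>2)}"

definition h2_norm :: "(complex \<Rightarrow> complex) \<Rightarrow> real" where
  "h2_norm f = sqrt (\<Sum>n. (cmod (taylor_coeff f n))\<^sup>2)"

definition h2_dist :: "(complex \<Rightarrow> complex) \<Rightarrow> (complex \<Rightarrow> complex) \<Rightarrow> real" where
  "h2_dist f g = h2_norm (\<lambda>z. f z - g z)"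

definition h2_open :: "(complex \<Rightarrow> complex) set \<Rightarrow> bool" where
  "h2_open U \<longleftrightarrow> U \<subseteq> H2 \<and> (\<forall>x\<in>U. \<exists>e>0. \<forall>y\<in>H2. h2_dist x y < e \<longrightarrow> y \<in> U)"

definition Dop :: "(complex \<Rightarrow> complex) \<Rightarrow> (complex \<Rightarrow> complex)" where
  "Dop f = (\<lambda>z. if z \<in> ball 0 1 then deriv f z else 0)"

definition Edom :: "(complex \<Rightarrow> complex) set" where
  "Edom = {f \<in> H2. Dop f \<in> H2}"

definition lower_density :: "nat set \<Rightarrow> ereal" where
  "lower_density E = liminf (\<lambda>N. ereal (real (card (E \<inter> {1..N})) / real N))"

definition freq_hypercyclic_D_H2 :: bool where
  "freq_hypercyclic_D_H2 \<longleftrightarrow>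
     (\<exists>f. f \<in> Edom \<and> (\<forall>n\<ge>1. (Dop ^^ n) f \<in> Edom) \<and>
          (\<forall>U. h2_open U \<and> U \<noteq> {} \<longrightarrow> lower_density {n. n \<ge> 1 \<and> (Dop ^^ n) f \<in> U} > 0))"

end

theory Submission
  imports Defs "HOL-Complex_Analysis.Cauchy_Integral_Formula"
begin

definition FF :: "complex fps \<Rightarrow> complex \<Rightarrow> complex" where
  "FF A z = (if z \<in> ball 0 1 then eval_fps A z else 0)"

lemma FF_eq_near:
  assumes "w \<in> ball 0 1"
  shows "eventually (\<lambda>z. FF A z = eval_fps A z) (nhds w)"
proof -
  have "eventually (\<lambda>z. z \<in> ball (0::complex) 1) (nhds w)"
    using assms by (intro eventually_nhds_in_open) auto
  thus ?thesis by eventually_elim (simp add: FF_def)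
qed

lemma ball_sub_eball: "fps_conv_radius A \<ge> 1 \<Longrightarrow> ball 0 1 \<subseteq> eball 0 (fps_conv_radius A)"
  by (metis ball_eball_mono one_ereal_def)

lemma in_rad: assumes a: "fps_conv_radius A \<ge> 1" "cmod z < 1" shows "ereal (cmod z) < fps_conv_radius A"
proof -
  have "ereal (cmod z) < 1" using a(2) by (simp add: one_ereal_def)
  thus ?thesis using a(1) by (rule less_le_trans)
qed

lemma FF_taylor:
  assumes "fps_conv_radius A \<ge> 1"
  shows "taylor_coeff (FF A) n = fps_nth A n"
proof -
  have "(deriv ^^ n) (FF A) 0 = (deriv ^^ n) (eval_fps A) 0"
    by (intro higher_deriv_cong_ev FF_eq_near) auto
  moreover have "fps_conv_radius A > 0"
  proof -
    have "(0::ereal) < 1" by simp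
    thus ?thesis using assms by (rule less_le_trans)
  qed
  ultimately show ?thesis
    unfolding taylor_coeff_def using fps_nth_conv_deriv[of A n] by simp
qed

lemma FF_holo:
  assumes "fps_conv_radius A \<ge> 1"
  shows "FF A holomorphic_on ball 0 1"
proof -
  have "eval_fps A holomorphic_on ball 0 1"
    using assms by (intro holomorphic_on_eval_fps ball_sub_eball)
  moreover have "FF A holomorphic_on ball 0 1 \<longleftrightarrow> eval_fps A holomorphic_on ball 0 1"
    by (rule holomorphic_cong) (auto simp: FF_def)
  ultimately show ?thesis by simp
qed

lemma FF_H2:
  assumes "fps_conv_radius A \<ge> 1" "summable (\<lambda>n. (cmod (fps_nth A n))\<^sup>2)"
  shows "FF A \<in> H2"
  using assms FF_holo[OF assms(1)] FF_taylor[OF assms(1)]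
  unfolding H2_def by (auto simp: FF_def)

lemma Dop_FF:
  assumes "fps_conv_radius A \<ge> 1"
  shows "Dop (FF A) = FF (fps_deriv A)"
proof
  fix z :: complex
  show "Dop (FF A) z = FF (fps_deriv A) z"
  proof (cases "z \<in> ball 0 1")
    case True
    have "deriv (FF A) z = deriv (eval_fps A) z"
      by (intro deriv_cong_ev FF_eq_near True refl)
    also have "\<dots> = eval_fps (fps_deriv A) z"
      using True in_rad[OF assms] by (intro eval_fps_deriv[symmetric]) auto
    finally show ?thesis using True by (simp add: Dop_def FF_def)
  qed (simp add: Dop_def FF_def)
qed

lemma radius_ge1:
  assumes "summable (\<lambda>n. (cmod (a n))\<^sup>2)"
  shows "conv_radius a \<ge> 1"
proof -
  have "(\<lambda>n. (cmod (a n))\<^sup>2) \<longlonglongrightarrow> 0" using summable_LIMSEQ_zero[OF assms] .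
  then have "bounded (range (\<lambda>n. (cmod (a n))\<^sup>2))" by (rule convergent_imp_bounded)
  then obtain M where M: "\<And>n. (cmod (a n))\<^sup>2 \<le> M"
    by (auto simp: bounded_iff)
  have Mb: "cmod (a n) \<le> sqrt M" for n
  proof -
    have "cmod (a n) = sqrt ((cmod (a n))\<^sup>2)" by simp
    also have "\<dots> \<le> sqrt M" using M[of n] by (rule real_sqrt_le_mono)
    finally show ?thesis .
  qed
  show ?thesis
  proof (rule conv_radius_geI_ex)
    fix r :: real assume r: "0 < r" "ereal r < 1"
    hence r1: "r < 1" by simp
    have sg: "summable (\<lambda>n. sqrt M * r ^ n)"
      using r r1 by (intro summable_mult summable_geometric) auto
    have "summable (\<lambda>n. norm (a n * (of_real r :: complex) ^ n))"
    proof (rule summable_comparison_test'[OF sg, where N=0])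
      fix n show "norm (norm (a n * (of_real r :: complex) ^ n)) \<le> sqrt M * r ^ n"
        using Mb[of n] r by (auto simp: norm_mult norm_power intro!: mult_right_mono)
    qed
    hence "summable (\<lambda>n. a n * (of_real r :: complex) ^ n)" by (rule summable_norm_cancel)
    thus "\<exists>z::complex. norm z = r \<and> summable (\<lambda>n. a n * z ^ n)"
      using r by (intro exI[of _ "of_real r"]) auto
  qed
qed

lemma H2_rep:
  assumes "f \<in> H2"
  shows "f = FF (Abs_fps (taylor_coeff f))" "fps_conv_radius (Abs_fps (taylor_coeff f)) \<ge> 1"
    "summable (\<lambda>n. (cmod (taylor_coeff f n))\<^sup>2)"
proof -
  show r: "fps_conv_radius (Abs_fps (taylor_coeff f)) \<ge> 1"
    using assms radius_ge1[of "taylor_coeff f"] by (simp add: H2_def fps_conv_radius_def)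
  show "summable (\<lambda>n. (cmod (taylor_coeff f n))\<^sup>2)" using assms by (simp add: H2_def)
  show "f = FF (Abs_fps (taylor_coeff f))"
  proof
    fix w :: complex
    show "f w = FF (Abs_fps (taylor_coeff f)) w"
    proof (cases "w \<in> ball 0 1")
      case True
      have hol: "f holomorphic_on ball 0 1" using assms by (simp add: H2_def)
      have "(\<lambda>n. taylor_coeff f n * w ^ n) sums f w"
        using holomorphic_power_series[OF hol True] by (simp add: taylor_coeff_def)
      moreover have "(\<lambda>n. taylor_coeff f n * w ^ n) sums eval_fps (Abs_fps (taylor_coeff f)) w"
        using sums_eval_fps[of w "Abs_fps (taylor_coeff f)"] in_rad[OF r, of w] True by auto
      ultimately show ?thesis using True sums_unique2 by (auto simp: FF_def)
    next
      case False thus ?thesis using assms by (auto simp: FF_def H2_def)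
    qed
  qed
qed

lemma dist_FF:
  assumes "fps_conv_radius A \<ge> 1" "fps_conv_radius B \<ge> 1"
  shows "h2_dist (FF A) (FF B) = sqrt (\<Sum>n. (cmod (fps_nth A n - fps_nth B n))\<^sup>2)"
proof -
  have rAB: "fps_conv_radius (A - B) \<ge> 1"
    using fps_conv_radius_diff[of A B] assms by (auto simp: min_def split: if_splits)
  have "(\<lambda>z. FF A z - FF B z) = FF (A - B)"
  proof
    fix z show "FF A z - FF B z = FF (A - B) z"
      using in_rad[OF assms(1)] in_rad[OF assms(2)]
      by (auto simp: FF_def intro!: eval_fps_diff[symmetric])
  qed
  thus ?thesis unfolding h2_dist_def h2_norm_def using FF_taylor[OF rAB] by simp
qed

fun v2 :: "nat \<Rightarrow> nat" where
  "v2 n = (if n = 0 \<or> odd n then 0 else Suc (v2 (n div 2)))"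
declare v2.simps[simp del]

lemma v2_odd: "v2 (Suc (2* T)) = 0" by (simp add: v2.simps)
lemma v2_even: "v2 (2 * (Suc T)) = Suc (v2 (Suc T))" by (subst v2.simps) simp
lemma v2_pow: "v2 (2^v * (2* s+1)) = v"
proof (induction v)
  case 0 then show ?case using v2_odd[of s] by simp
next
  case (Suc v)
  define X where "X = 2^v * (2* s+1)"
  have e: "2^Suc v * (2* s+1) = 2 * X" by (simp add: X_def)
  have "X > 0" by (simp add: X_def)
  then obtain Y where "X = Suc Y" by (cases X) auto
  hence "v2 (2 * X) = Suc (v2 X)" using v2_even[of Y] by simp
  thus ?case using Suc by (simp add: e X_def)
qed

fun Sr :: "(nat \<Rightarrow> nat) \<Rightarrow> nat \<Rightarrow> nat" where
  "Sr h 0 = 0"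
| "Sr h (Suc T) = Sr h T + h (v2 (Suc T))"

lemma Sr_sum: "Sr h T = (\<Sum>s<T. h (v2 (Suc s)))"
  by (induction T) auto

lemma Sr_double: "Sr h (2* T) = T * h 0 + Sr (\<lambda>a. h (Suc a)) T"
proof (induction T)
  case (Suc T)
  have "Sr h (2 * Suc T) = Sr h (2* T) + h (v2 (Suc (2* T))) + h (v2 (2 * Suc T))"
    by (simp add: numeral_2_eq_2)
  also have "\<dots> = T * h 0 + Sr (\<lambda>a. h (Suc a)) T + h 0 + h (Suc (v2 (Suc T)))"
    using Suc v2_odd[of T] v2_even[of T] by simp
  finally show ?case by simp
qed simp

lemma Sr_bound:
  "\<forall>M h. (\<forall>v. real (h v) \<le> M * (3/2)^v) \<longrightarrow> real (Sr h T) \<le> 4 * M * T"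
proof (induction T rule: less_induct)
  case (less T)
  show ?case
  proof (intro allI impI)
    fix M h assume hb: "\<forall>v. real (h v) \<le> M * (3/2)^v"
    have h0': "real (h 0) \<le> M" using hb[rule_format, of 0] by simp
    have M0: "M \<ge> 0" using h0' of_nat_0_le_iff[of "h 0"] by linarith
    have hb': "\<forall>v. real ((\<lambda>a. h (Suc a)) v) \<le> (3/2* M) * (3/2)^v"
    proof
      fix v
      have "real (h (Suc v)) \<le> M * ((3/2) * (3/2)^v)" using hb[rule_format, of "Suc v"] by simp
      thus "real ((\<lambda>a. h (Suc a)) v) \<le> (3/2* M) * (3/2)^v" by (simp add: mult_ac)
    qed
    have h0: "real (h 0) \<le> M" using hb[rule_format, of 0] by simp
    define T' where "T' = T div 2"
    have T': "T = 2 * T' \<or> T = Suc (2 * T')" unfolding T'_def by presburger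
    show "real (Sr h T) \<le> 4 * M * T"
    proof (cases "T' = 0")
      case True
      then have "T = 0 \<or> T = 1" using T' by auto
      then show ?thesis using h0 M0 by (auto simp: v2_odd[of 0, simplified])
    next
      case False
      then have lt: "T' < T" using T' by auto
      have IH: "real (Sr (\<lambda>a. h (Suc a)) T') \<le> 4 * (3/2* M) * T'"
        using less[OF lt, rule_format, of "\<lambda>a. h (Suc a)" "3/2* M"] hb' by simp
      have e: "real (Sr h (2* T')) \<le> 7 * M * T'"
      proof -
        have "real (Sr h (2* T')) = T' * real (h 0) + real (Sr (\<lambda>a. h (Suc a)) T')"
          by (simp add: Sr_double)
        also have "\<dots> \<le> T' * M + 4 * (3/2* M) * T'"
          using IH h0 by (intro add_mono mult_left_mono) auto
        finally show ?thesis by simp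
      qed
      show ?thesis
      proof (cases "T = 2* T'")
        case True then show ?thesis using e M0 by simp
      next
        case F: False
        then have "T = Suc (2* T')" using T' by auto
        then have "real (Sr h T) = real (Sr h (2* T')) + real (h (v2 (Suc (2* T'))))" by simp
        also have "\<dots> \<le> 7 * M * T' + M" using e h0 v2_odd[of T'] by simp
        finally have a: "real (Sr h T) \<le> 7 * (M * T') + M" by simp
        have b: "4 * M * real T = 4 * M + 8 * (M * T')" using \<open>T = Suc (2* T')\<close>
          by (simp add: algebra_simps)
        have "M * T' \<ge> 0" using M0 by simp
        thus ?thesis using a b M0 by linarith
      qed
    qed
  qed
qed

definition tl0 :: "nat \<Rightarrow> (rat \<times> rat) list" where "tl0 j = from_nat j"
definition KK :: "nat \<Rightarrow> nat" where "KK j = length (tl0 j)"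
definition bc :: "nat \<Rightarrow> nat \<Rightarrow> complex" where
  "bc j i = (if i < KK j then Complex (of_rat (fst (tl0 j ! i))) (of_rat (snd (tl0 j ! i))) else 0)"
definition Bs :: "nat \<Rightarrow> nat" where "Bs j = nat \<lceil>\<Sum>i<KK j. (cmod (bc j i))\<^sup>2\<rceil>"
definition GG :: "nat \<Rightarrow> nat" where "GG j = fact (KK j) * Bs j + 1"
definition Ln :: "nat \<Rightarrow> nat" where "Ln j = GG j + KK j"
definition vj :: "nat \<Rightarrow> nat" where "vj j = 2 * (j + (\<Sum>i\<le>j. Ln i))"
definition len :: "nat \<Rightarrow> nat" where "len v = (if \<exists>j. vj j = v then Ln (THE j. vj j = v) else 1)"
definition pos :: "nat \<Rightarrow> nat" where "pos t = Sr len t"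
definition atb :: "nat \<Rightarrow> nat \<Rightarrow> nat \<Rightarrow> nat \<Rightarrow> bool" where
  "atb t j i p \<longleftrightarrow> v2 (Suc t) = vj j \<and> i < KK j \<and> p = pos t + GG j + i"
definition cc :: "nat \<Rightarrow> complex" where
  "cc p = (if \<exists>x. atb (fst x) (fst (snd x)) (snd (snd x)) p
           then (let x = (SOME x. atb (fst x) (fst (snd x)) (snd (snd x)) p)
                 in fact (snd (snd x)) * bc (fst (snd x)) (snd (snd x))) else 0)"

lemma vj_mono: "strict_mono vj"
  by (rule strict_monoI_Suc) (simp add: vj_def)

lemma vj_inj: "vj j = vj j' \<Longrightarrow> j = j'"
  using strict_mono_eq[OF vj_mono] by blast

lemma Ln_ge1: "Ln j \<ge> 1" by (simp add: Ln_def GG_def)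

lemma len_vj: "len (vj j) = Ln j"
proof -
  have "(THE j'. vj j' = vj j) = j" using vj_inj by blast
  thus ?thesis by (auto simp: len_def)
qed

lemma len_ge1: "len v \<ge> 1"
  using Ln_ge1 by (simp add: len_def)

lemma len_bound: "real (len v) \<le> 1 * (3/2)^v"
proof (cases "\<exists>j. vj j = v")
  case True
  then obtain j where v: "v = vj j" by auto
  define Y where "Y = j + (\<Sum>i\<le>j. Ln i)"
  have "Ln j \<le> (\<Sum>i\<le>j. Ln i)" by (rule member_le_sum) auto
  hence "Ln j \<le> Y" by (simp add: Y_def)
  also have "Y < 2^Y" by (rule less_exp)
  finally have "Ln j \<le> 2^Y" by simp
  hence "real (Ln j) \<le> real (2^Y)" by (simp only: of_nat_le_iff)
  hence "real (Ln j) \<le> 2^Y" by simp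
  also have "(2::real)^Y \<le> (9/4)^Y" by (rule power_mono) auto
  also have "(9/4::real)^Y = (3/2)^(2* Y)" by (simp add: power_mult power2_eq_square)
  finally show ?thesis using v len_vj[of j] by (simp add: vj_def Y_def)
next
  case False
  then have "len v = 1" by (simp add: len_def)
  moreover have "(1::real) \<le> (3/2)^v" by (rule one_le_power) auto
  ultimately show ?thesis by simp
qed

lemma pos_Suc: "pos (Suc t) = pos t + len (v2 (Suc t))"
  by (simp add: pos_def)

lemma pos_less: "t < t' \<Longrightarrow> pos t < pos t'"
proof (induction t' rule: less_induct)
  case (less t')
  then obtain u where u: "t' = Suc u" by (cases t') auto
  have "pos u < pos t'" using pos_Suc[of u] len_ge1[of "v2 (Suc u)"] u by simp
  have "pos t \<le> pos u"
  proof (cases "t = u")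
    case False
    hence "t < u" using less.prems u by simp
    thus ?thesis using less.IH[of u] u by simp
  qed simp
  thus ?case using \<open>pos u < pos t'\<close> by simp
qed

lemma pos_mono: "t \<le> t' \<Longrightarrow> pos t \<le> pos t'"
  using pos_less by (cases "t = t'") (auto intro: less_imp_le)

lemma pos_ge: "t \<le> pos t"
proof (induction t)
  case (Suc t) then show ?case using pos_Suc[of t] len_ge1[of "v2 (Suc t)"] by simp
qed (simp add: pos_def)

lemma pos_bound: "real (pos t) \<le> 4 * t"
  using Sr_bound[of t] len_bound unfolding pos_def by fastforce

lemma atb_lt: "atb t j i p \<Longrightarrow> pos t \<le> p \<and> p < pos (Suc t)"
  by (auto simp: atb_def pos_Suc len_vj Ln_def)

lemma atb_unique:
  assumes "atb t j i p" "atb t' j' i' p"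
  shows "t = t' \<and> j = j' \<and> i = i'"
proof -
  have tt: "t = t'"
  proof (rule ccontr)
    assume "t \<noteq> t'"
    then consider "Suc t \<le> t'" | "Suc t' \<le> t" by linarith
    thus False
    proof cases
      case 1 thus False using pos_mono[OF 1] atb_lt[OF assms(1)] atb_lt[OF assms(2)] by linarith
    next
      case 2 thus False using pos_mono[OF 2] atb_lt[OF assms(1)] atb_lt[OF assms(2)] by linarith
    qed
  qed
  then have "vj j = vj j'" using assms by (simp add: atb_def)
  then have "j = j'" by (rule vj_inj)
  then show ?thesis using tt assms by (auto simp: atb_def)
qed

lemma cc_at:
  assumes "atb t j i p"
  shows "cc p = fact i * bc j i"
proof -
  let ?P = "\<lambda>x. atb (fst x) (fst (snd x)) (snd (snd x)) p"
  have ex: "?P (t, j, i)" using assms by simp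
  hence px: "?P (SOME x. ?P x)" by (rule someI)
  obtain a b c where abc: "(SOME x. ?P x) = (a, b, c)" by (cases "SOME x. ?P x") auto
  have "atb a b c p" using px abc by simp
  hence "(SOME x. ?P x) = (t, j, i)" using atb_unique[OF assms] abc by simp
  thus ?thesis unfolding cc_def using ex by (auto simp: Let_def)
qed

lemma cc_nz: "cc p \<noteq> 0 \<Longrightarrow> \<exists>t j i. atb t j i p"
  unfolding cc_def by (auto split: if_splits)

lemma est:
  assumes "atb t j i p" "m \<le> pos t" "p = m + n"
  shows "(cmod (cc p))\<^sup>2 \<le> fact n"
proof -
  have iK: "i < KK j" and pe: "p = pos t + GG j + i" using assms(1) by (auto simp: atb_def)
  have nge: "n \<ge> GG j + i" using assms(2,3) pe by linarith
  have b: "(cmod (bc j i))\<^sup>2 \<le> real (Bs j)"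
  proof -
    have "(cmod (bc j i))\<^sup>2 \<le> (\<Sum>k<KK j. (cmod (bc j k))\<^sup>2)"
      using iK by (intro member_le_sum) auto
    also have "\<dots> \<le> real (Bs j)" unfolding Bs_def by (rule real_nat_ceiling_ge)
    finally show ?thesis .
  qed
  have s1: "(cmod (cc p))\<^sup>2 \<le> fact i * (fact (KK j) * real (Bs j))"
  proof -
    have "(cmod (cc p))\<^sup>2 = fact i * (fact i * (cmod (bc j i))\<^sup>2)"
      using cc_at[OF assms(1)] by (simp add: norm_mult power2_eq_square)
    also have "\<dots> \<le> fact i * (fact (KK j) * real (Bs j))"
      using b iK by (intro mult_left_mono mult_mono fact_mono) auto
    finally show ?thesis .
  qed
  have s2: "fact (KK j) * real (Bs j) \<le> fact (n - i)"
  proof -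
    have "fact (KK j) * real (Bs j) = real (GG j - 1)"
      by (simp add: GG_def)
    also have "real (GG j - 1) \<le> real (n - i)" using nge by simp
    also have "real (n - i) \<le> fact (n - i)"
    proof -
      have "n - i \<le> fact (n - i)" by (rule fact_ge_self)
      hence "real (n - i) \<le> real (fact (n - i))" by (simp only: of_nat_le_iff)
      thus ?thesis by simp
    qed
    finally show ?thesis .
  qed
  have s3: "fact i * (fact (n - i) :: real) \<le> fact n"
  proof -
    have "fact i * fact (n - i) * (n choose i) = (fact n :: nat)"
      using nge by (intro binomial_fact_lemma) auto
    moreover have "n choose i \<ge> 1"
    proof -
      have "i \<le> n" using nge by simp
      hence "0 < n choose i" using zero_less_binomial_iff by blast
      thus ?thesis by linarith
    qed
    ultimately have "fact i * fact (n - i) \<le> (fact n :: nat)"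
      using mult_le_mono2[of 1 "n choose i" "fact i * fact (n - i)"] by simp
    hence "real (fact i * fact (n - i)) \<le> real (fact n)" by (simp only: of_nat_le_iff)
    thus ?thesis by simp
  qed
  have "fact i * (fact (KK j) * real (Bs j)) \<le> fact i * fact (n - i)"
    using s2 by (intro mult_left_mono) auto
  thus ?thesis using s1 s3 by linarith
qed

lemma density:
  assumes sub: "\<And>t. v2 (Suc t) = vj j \<Longrightarrow> pos t + GG j \<in> S"
  shows "lower_density S > 0"
proof -
  define v where "v = vj j"
  define G where "G = GG j"
  define Q :: nat where "Q = 8 * 2^v"
  have Q0: "Q > 0" by (simp add: Q_def)
  have G1: "G \<ge> 1" by (simp add: G_def GG_def)
  define ts where "ts s = 2^v * (2* s+1) - 1" for s :: nat
  have tsS: "Suc (ts s) = 2^v * (2* s+1)" for s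
  proof -
    have "2^v * (2* s+1) > (0::nat)" by simp
    thus ?thesis by (simp add: ts_def)
  qed
  define ms where "ms s = pos (ts s) + G" for s
  have ms_in: "ms s \<in> S" for s
    using sub[of "ts s"] v2_pow[of v s] tsS[of s] by (simp add: ms_def G_def v_def)
  have ts_mono: "strict_mono ts"
  proof (rule strict_monoI)
    fix s s' :: nat assume "s < s'"
    hence "2^v * (2* s+1) < (2::nat)^v * (2* s'+1)" by simp
    hence "Suc (ts s) < Suc (ts s')" by (simp only: tsS)
    thus "ts s < ts s'" by simp
  qed
  have ms_inj: "inj ms"
  proof (rule strict_mono_imp_inj_on, rule strict_monoI)
    fix s s' :: nat assume "s < s'"
    thus "ms s < ms s'" using pos_less strict_monoD[OF ts_mono] by (simp add: ms_def)
  qed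
  have ms_le: "real (ms s) \<le> real Q * s + Q + G" for s
  proof -
    have a: "real (pos (ts s)) \<le> 4 * real (ts s)" using pos_bound[of "ts s"] by simp
    have "ts s \<le> 2^v * (2* s+1)" using tsS[of s] by linarith
    hence b: "real (ts s) \<le> real (2^v * (2* s+1))" by (simp only: of_nat_le_iff)
    have c: "4 * real (2^v * (2* s+1)) = real Q * s + real Q / 2" by (simp add: Q_def algebra_simps)
    have d: "real (ms s) = real (pos (ts s)) + G" by (simp add: ms_def)
    have "real Q \<ge> 0" by simp
    thus ?thesis using a b c d by linarith
  qed
  have card_ge: "real ((N - G) div Q) \<le> real (card (S \<inter> {1..N}))" for N
  proof -
    define SN where "SN = (N - G) div Q"
    have "ms ` {..<SN} \<subseteq> S \<inter> {1..N}"
    proof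
      fix x assume "x \<in> ms ` {..<SN}"
      then obtain s where s: "s < SN" "x = ms s" by auto
      have "Q * SN \<le> N - G" unfolding SN_def by (simp add: times_div_less_eq_dividend)
      moreover have "SN > 0" using s by simp
      hence "N - G > 0" unfolding SN_def by (metis div_0 less_irrefl zero_less_iff_neq_zero diff_is_0_eq')
      ultimately have "Q * SN + G \<le> N" by linarith
      hence "real (Q * SN + G) \<le> real N" by (simp only: of_nat_le_iff)
      hence "real Q * SN + G \<le> N" by simp
      moreover have "real Q * s + Q \<le> real Q * SN"
      proof -
        have "Suc s \<le> SN" using s by simp
        hence "real Q * Suc s \<le> real Q * SN" by (intro mult_left_mono) auto
        thus ?thesis by (simp add: algebra_simps)
      qed
      ultimately have "real (ms s) \<le> N" using ms_le[of s] by linarith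
      moreover have "ms s \<ge> 1" using G1 by (simp add: ms_def)
      ultimately show "x \<in> S \<inter> {1..N}" using s ms_in by auto
    qed
    hence "card (ms ` {..<SN}) \<le> card (S \<inter> {1..N})" by (intro card_mono) auto
    moreover have "card (ms ` {..<SN}) = SN"
      using card_image[OF inj_on_subset[OF ms_inj]] by auto
    ultimately show ?thesis by (simp add: SN_def)
  qed
  have SN_ge: "real ((N - G) div Q) \<ge> real (N - G) / Q - 1" for N
  proof -
    have "N - G = Q * ((N - G) div Q) + (N - G) mod Q" by simp
    moreover have "(N - G) mod Q < Q" using Q0 by simp
    ultimately have "N - G \<le> Q * ((N - G) div Q) + Q" by linarith
    hence "real (N - G) \<le> real (Q * ((N - G) div Q) + Q)" by (simp only: of_nat_le_iff)
    hence "real (N - G) \<le> real Q * ((N - G) div Q) + Q" by simp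
    thus ?thesis using Q0 by (simp add: field_simps)
  qed
  have ev: "eventually (\<lambda>N. ereal (1 / (2 * Q)) \<le> ereal (real (card (S \<inter> {1..N})) / real N)) sequentially"
  proof (rule eventually_sequentiallyI[of "2 * (G+Q)"])
    fix N assume N: "2 * (G+Q) \<le> N"
    hence Npos: "real N > 0" using Q0 by simp
    have NG: "real (N - G) = real N - G" using N by simp
    have "real N / (2* Q) \<le> real (N - G) / Q - 1"
      using N Q0 NG by (simp add: field_simps)
    also have "\<dots> \<le> real (card (S \<inter> {1..N}))" using SN_ge[of N] card_ge[of N] by linarith
    finally have "1 / (2* Q) \<le> real (card (S \<inter> {1..N})) / real N"
      using Npos Q0 by (simp add: field_simps)
    thus "ereal (1 / (2 * Q)) \<le> ereal (real (card (S \<inter> {1..N})) / real N)" by simp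
  qed
  have "ereal (1 / (2 * Q)) \<le> lower_density S"
    unfolding lower_density_def by (rule Liminf_bounded[OF ev])
  moreover have "ereal (1 / (2 * Q)) > 0" using Q0 by simp
  ultimately show ?thesis by order
qed

definition gg :: "nat \<Rightarrow> complex fps" where "gg m = Abs_fps (\<lambda>k. cc (m + k) / fact k)"

lemma pow2_fact: "(2::real)^n \<le> 2 * fact n"
proof (induction n)
  case (Suc n)
  show ?case
  proof (cases n)
    case 0 then show ?thesis by simp
  next
    case (Suc n')
    have "(2::real)^Suc n = 2 * 2^n" by simp
    also have "\<dots> \<le> 2 * (2 * fact n)" using Suc.IH by simp
    also have "\<dots> \<le> 2 * (real (Suc n) * fact n)"
      using Suc by (intro mult_left_mono mult_right_mono) auto
    finally show ?thesis by simp
  qed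
qed simp

lemma inv_fact_le: "1 / (fact n :: real) \<le> 2 * (1/2)^n"
proof -
  have "(2::real)^n \<le> 2 * fact n" by (rule pow2_fact)
  thus ?thesis by (simp add: field_simps power_one_over)
qed

lemma g_bound:
  assumes "\<And>t j i. atb t j i (m+k) \<Longrightarrow> m \<le> pos t"
  shows "(cmod (cc (m+k) / fact k))\<^sup>2 \<le> 2 * (1/2)^k"
proof (cases "cc (m+k) = 0")
  case True then show ?thesis by simp
next
  case False
  then obtain t j i where a: "atb t j i (m+k)" using cc_nz by blast
  have e: "(cmod (cc (m+k)))\<^sup>2 \<le> fact k" using est[OF a assms[OF a]] by simp
  have "(cmod (cc (m+k) / fact k))\<^sup>2 = (cmod (cc (m+k)))\<^sup>2 / (fact k)^2"
    by (simp add: norm_divide power_divide)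
  also have "\<dots> \<le> fact k / (fact k)^2" using e by (intro divide_right_mono) auto
  also have "\<dots> = 1 / fact k" by (simp add: power2_eq_square)
  also have "\<dots> \<le> 2 * (1/2)^k" by (rule inv_fact_le)
  finally show ?thesis .
qed

lemma g_summable: "summable (\<lambda>k. (cmod (cc (m+k) / fact k))\<^sup>2)"
proof (rule summable_comparison_test'[where N = "pos (Suc m)"])
  show "summable (\<lambda>k. 2 * (1/2::real)^k)" by (intro summable_mult summable_geometric) auto
next
  fix k assume k: "pos (Suc m) \<le> k"
  have "(cmod (cc (m+k) / fact k))\<^sup>2 \<le> 2 * (1/2)^k"
  proof (rule g_bound)
    fix t j i assume a: "atb t j i (m+k)"
    have "pos (Suc m) < pos (Suc t)" using atb_lt[OF a] k by linarith
    hence "\<not> Suc t \<le> Suc m" using pos_mono[of "Suc t" "Suc m"] by linarith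
    hence "m \<le> t" by simp
    thus "m \<le> pos t" using pos_ge[of t] by linarith
  qed
  thus "norm ((cmod (cc (m+k) / fact k))\<^sup>2) \<le> 2 * (1/2)^k" by simp
qed

lemma gg_nth: "fps_nth (gg m) k = cc (m+k) / fact k"
  by (simp add: gg_def)

lemma gg_radius: "fps_conv_radius (gg m) \<ge> 1"
  unfolding fps_conv_radius_def using radius_ge1[of "fps_nth (gg m)"] g_summable[of m]
  by (simp add: gg_nth)

lemma gg_deriv: "fps_deriv (gg m) = gg (Suc m)"
proof (rule fps_ext)
  fix n
  have "fps_nth (fps_deriv (gg m)) n = of_nat (n+1) * (cc (m + Suc n) / fact (Suc n))"
    by (simp add: fps_deriv_def gg_nth)
  also have "\<dots> = cc (Suc m + n) / fact n"
    by (simp add: field_simps del: of_nat_Suc)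
  finally show "fps_nth (fps_deriv (gg m)) n = fps_nth (gg (Suc m)) n" by (simp add: gg_nth)
qed

lemma orbit: "(Dop ^^ n) (FF (gg 0)) = FF (gg n)"
  by (induction n) (auto simp: Dop_FF[OF gg_radius] gg_deriv)

lemma gg_H2: "FF (gg m) \<in> H2"
  using FF_H2[OF gg_radius] g_summable[of m] by (simp add: gg_nth)

lemma gg_Edom: "FF (gg m) \<in> Edom"
  using gg_H2[of m] gg_H2[of "Suc m"] by (simp add: Edom_def Dop_FF[OF gg_radius] gg_deriv)

lemma block_in:
  assumes "v2 (Suc t) = vj j" "k < KK j"
  shows "cc (pos t + GG j + k) / fact k = bc j k"
  using cc_at[of t j k] assms by (simp add: atb_def)

lemma block_out:
  assumes "v2 (Suc t) = vj j" "k \<ge> KK j"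
  shows "(cmod (cc (pos t + GG j + k) / fact k))\<^sup>2 \<le> 2 * (1/2)^k"
proof (rule g_bound)
  fix t' j' i' assume a: "atb t' j' i' (pos t + GG j + k)"
  have ps: "pos (Suc t) = pos t + Ln j" using pos_Suc[of t] assms(1) len_vj[of j] by simp
  have "pos (Suc t) < pos (Suc t')" using atb_lt[OF a] assms(2) ps by (simp add: Ln_def)
  hence "\<not> Suc t' \<le> Suc t" using pos_mono[of "Suc t'" "Suc t"] by linarith
  hence "Suc t \<le> t'" by simp
  hence "pos (Suc t) \<le> pos t'" by (rule pos_mono)
  thus "pos t + GG j \<le> pos t'" using ps by (simp add: Ln_def)
qed

lemma norm_diff_sq: "(cmod (x - y))\<^sup>2 \<le> 2 * (cmod x)\<^sup>2 + 2 * (cmod y)\<^sup>2"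
proof -
  have "cmod (x - y) \<le> cmod x + cmod y" by (rule norm_triangle_ineq4)
  hence "(cmod (x - y))\<^sup>2 \<le> (cmod x + cmod y)\<^sup>2" by (intro power_mono) auto
  also have "\<dots> = 2 * (cmod x)\<^sup>2 + 2 * (cmod y)\<^sup>2 - (cmod x - cmod y)\<^sup>2"
    by (simp add: power2_eq_square algebra_simps)
  also have "\<dots> \<le> 2 * (cmod x)\<^sup>2 + 2 * (cmod y)\<^sup>2" by simp
  finally show ?thesis .
qed

lemma approx:
  assumes sa: "summable (\<lambda>n. (cmod (a n))\<^sup>2)" and e: "e > 0"
  shows "\<exists>j. (\<Sum>k<KK j. (cmod (a k - bc j k))\<^sup>2) < e\<^sup>2/8 \<and> (\<Sum>k. (cmod (a (k + KK j)))\<^sup>2) < e\<^sup>2/8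
             \<and> 8 * (1/2)^(KK j) < e\<^sup>2/2"
proof -
  have e2: "e\<^sup>2 > 0" using e by simp
  obtain N1 where N1: "\<forall>n\<ge>N1. norm (\<Sum>i. (cmod (a (i + n)))\<^sup>2) < e\<^sup>2/8"
    using suminf_exist_split[of "e\<^sup>2/8", OF _ sa] e2 by auto
  obtain N2 where N2: "(1/2::real)^N2 < e\<^sup>2/16"
    using real_arch_pow_inv[of "e\<^sup>2/16" "1/2"] e2 by auto
  define K where "K = max (max N1 N2) 1"
  have K1: "K \<ge> 1" and KN1: "K \<ge> N1" and KN2: "K \<ge> N2" by (auto simp: K_def)
  have t1: "(\<Sum>k. (cmod (a (k + K)))\<^sup>2) < e\<^sup>2/8"
  proof -
    have "(\<Sum>k. (cmod (a (k + K)))\<^sup>2) \<le> norm (\<Sum>k. (cmod (a (k + K)))\<^sup>2)" by simp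
    thus ?thesis using N1 KN1 by fastforce
  qed
  have t2: "8 * (1/2::real)^K < e\<^sup>2/2"
  proof -
    have "(1/2::real)^K \<le> (1/2)^N2" using KN2 by (intro power_decreasing) auto
    thus ?thesis using N2 by linarith
  qed
  define d where "d = e / (8 * K)"
  have d0: "d > 0" using e K1 by (simp add: d_def)
  have ex: "\<forall>k. \<exists>q::rat. \<bar>of_rat q - x k\<bar> < d" for x :: "nat \<Rightarrow> real"
  proof
    fix k
    obtain r where r: "r \<in> \<rat>" "x k - d < r" "r < x k" using Rats_dense_in_real[of "x k - d" "x k"] d0 by auto
    then obtain q where "r = of_rat q" by (auto elim: Rats_cases)
    thus "\<exists>q::rat. \<bar>of_rat q - x k\<bar> < d" using r by (intro exI[of _ q]) auto
  qed
  obtain qr :: "nat \<Rightarrow> rat" where qr: "\<And>k. \<bar>of_rat (qr k) - Re (a k)\<bar> < d"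
    using choice[OF ex[of "\<lambda>k. Re (a k)"]] by blast
  obtain qi :: "nat \<Rightarrow> rat" where qi: "\<And>k. \<bar>of_rat (qi k) - Im (a k)\<bar> < d"
    using choice[OF ex[of "\<lambda>k. Im (a k)"]] by blast
  define xs where "xs = map (\<lambda>k. (qr k, qi k)) [0..<K]"
  define j where "j = to_nat xs"
  have tl: "tl0 j = xs" by (simp add: tl0_def j_def)
  have KK: "KK j = K" by (simp add: KK_def tl xs_def)
  have bcj: "bc j k = Complex (of_rat (qr k)) (of_rat (qi k))" if "k < K" for k
    using that by (simp add: bc_def KK tl xs_def)
  have s1: "(\<Sum>k<K. (cmod (a k - bc j k))\<^sup>2) < e\<^sup>2/8"
  proof -
    have "(\<Sum>k<K. (cmod (a k - bc j k))\<^sup>2) \<le> of_nat (card {..<K}) * (2 * d\<^sup>2)"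
    proof (rule sum_bounded_above)
      fix k assume "k \<in> {..<K}"
      hence "bc j k = Complex (of_rat (qr k)) (of_rat (qi k))" using bcj by simp
      hence "(cmod (a k - bc j k))\<^sup>2 = (Re (a k) - of_rat (qr k))\<^sup>2 + (Im (a k) - of_rat (qi k))\<^sup>2"
        by (simp add: cmod_power2)
      also have "\<dots> \<le> d\<^sup>2 + d\<^sup>2"
      proof (rule add_mono)
        have "\<bar>Re (a k) - of_rat (qr k)\<bar> \<le> d" using qr[of k] by (simp add: abs_minus_commute)
        hence "\<bar>Re (a k) - of_rat (qr k)\<bar>\<^sup>2 \<le> d\<^sup>2" by (intro power_mono) auto
        thus "(Re (a k) - of_rat (qr k))\<^sup>2 \<le> d\<^sup>2" by simp
        have "\<bar>Im (a k) - of_rat (qi k)\<bar> \<le> d" using qi[of k] by (simp add: abs_minus_commute)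
        hence "\<bar>Im (a k) - of_rat (qi k)\<bar>\<^sup>2 \<le> d\<^sup>2" by (intro power_mono) auto
        thus "(Im (a k) - of_rat (qi k))\<^sup>2 \<le> d\<^sup>2" by simp
      qed
      finally show "(cmod (a k - bc j k))\<^sup>2 \<le> 2 * d\<^sup>2" by simp
    qed
    also have "\<dots> = K * (2 * d\<^sup>2)" by simp
    also have "\<dots> = e\<^sup>2 / (32 * K)" using K1 by (simp add: d_def power2_eq_square field_simps)
    also have "\<dots> < e\<^sup>2/8" using K1 e2 by (simp add: field_simps)
    finally show ?thesis .
  qed
  show ?thesis using s1 t1 t2 KK by (intro exI[of _ j]) simp
qed

lemma err_sum:
  assumes sa: "summable (\<lambda>n. (cmod (a n))\<^sup>2)" and tj: "v2 (Suc t) = vj j"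
    and A: "(\<Sum>k<KK j. (cmod (a k - bc j k))\<^sup>2) < e\<^sup>2/8"
    and B: "(\<Sum>k. (cmod (a (k + KK j)))\<^sup>2) < e\<^sup>2/8"
    and C: "8 * (1/2)^(KK j) < e\<^sup>2/2"
  shows "(\<Sum>k. (cmod (a k - cc (pos t + GG j + k) / fact k))\<^sup>2) < e\<^sup>2"
proof -
  define K where "K = KK j"
  define g where "g k = cc (pos t + GG j + k) / fact k" for k
  define dd where "dd k = (cmod (a k - g k))\<^sup>2" for k
  have sg: "summable (\<lambda>k. (cmod (g k))\<^sup>2)" using g_summable[of "pos t + GG j"] by (simp add: g_def)
  have sd: "summable dd"
  proof (rule summable_comparison_test'[where N=0])
    show "summable (\<lambda>k. 2 * (cmod (a k))\<^sup>2 + 2 * (cmod (g k))\<^sup>2)"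
      using sa sg by (intro summable_add summable_mult) auto
    fix k show "norm (dd k) \<le> 2 * (cmod (a k))\<^sup>2 + 2 * (cmod (g k))\<^sup>2"
      using norm_diff_sq[of "a k" "g k"] by (simp add: dd_def)
  qed
  have split: "suminf dd = (\<Sum>k. dd (k + K)) + (\<Sum>k<K. dd k)"
    by (rule suminf_split_initial_segment[OF sd])
  have p1: "(\<Sum>k<K. dd k) = (\<Sum>k<KK j. (cmod (a k - bc j k))\<^sup>2)"
    unfolding K_def by (intro sum.cong refl) (simp add: dd_def g_def block_in[OF tj])
  have geo: "(\<lambda>k. 2 * (2 * (1/2::real)^(k + K))) = (\<lambda>k. (4 * (1/2)^K) * (1/2)^k)"
    by (simp add: power_add mult_ac)
  have sgeo: "summable (\<lambda>k. 2 * (2 * (1/2::real)^(k + K)))"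
    unfolding geo by (intro summable_mult summable_geometric) auto
  have sgeo_val: "(\<Sum>k. 2 * (2 * (1/2::real)^(k + K))) = 8 * (1/2)^K"
  proof -
    have "(\<Sum>k. (4 * (1/2::real)^K) * (1/2)^k) = (4 * (1/2)^K) * (\<Sum>k. (1/2::real)^k)"
      by (intro suminf_mult summable_geometric) auto
    also have "(\<Sum>k. (1/2::real)^k) = 2" using suminf_geometric[of "1/2::real"] by simp
    finally show ?thesis unfolding geo by simp
  qed
  have sa': "summable (\<lambda>k. 2 * (cmod (a (k + K)))\<^sup>2)"
    using summable_ignore_initial_segment[OF sa, of K] by (intro summable_mult) auto
  have p2: "(\<Sum>k. dd (k + K)) \<le> (\<Sum>k. 2 * (cmod (a (k + K)))\<^sup>2 + 2 * (2 * (1/2)^(k + K)))"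
  proof (rule suminf_le)
    fix k
    have "dd (k + K) \<le> 2 * (cmod (a (k + K)))\<^sup>2 + 2 * (cmod (g (k + K)))\<^sup>2"
      using norm_diff_sq by (simp add: dd_def)
    moreover have "(cmod (g (k + K)))\<^sup>2 \<le> 2 * (1/2)^(k + K)"
      unfolding g_def using block_out[OF tj, of "k + K"] by (simp add: K_def)
    ultimately show "dd (k + K) \<le> 2 * (cmod (a (k + K)))\<^sup>2 + 2 * (2 * (1/2)^(k + K))" by linarith
  next
    show "summable (\<lambda>k. dd (k + K))" using summable_ignore_initial_segment[OF sd] .
    show "summable (\<lambda>k. 2 * (cmod (a (k + K)))\<^sup>2 + 2 * (2 * (1/2::real)^(k + K)))"
      using sa' sgeo by (rule summable_add)
  qed
  also have "\<dots> = (\<Sum>k. 2 * (cmod (a (k + K)))\<^sup>2) + 8 * (1/2)^K"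
    using suminf_add[OF sa' sgeo] sgeo_val by simp
  also have "(\<Sum>k. 2 * (cmod (a (k + K)))\<^sup>2) = 2 * (\<Sum>k. (cmod (a (k + K)))\<^sup>2)"
    using summable_ignore_initial_segment[OF sa, of K] by (intro suminf_mult) auto
  finally have "(\<Sum>k. dd (k + K)) \<le> 2 * (\<Sum>k. (cmod (a (k + K)))\<^sup>2) + 8 * (1/2)^K" .
  hence "suminf dd < e\<^sup>2/8 + 2 * (e\<^sup>2/8) + e\<^sup>2/2"
    using split p1 A B C by (simp add: K_def) 
  moreover have "0 \<le> (\<Sum>k<KK j. (cmod (a k - bc j k))\<^sup>2)" by (simp add: sum_nonneg)
  ultimately have "suminf dd < e\<^sup>2" using A by linarith
  moreover have "suminf dd = (\<Sum>k. (cmod (a k - cc (pos t + GG j + k) / fact k))\<^sup>2)"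
    by (rule arg_cong[where f=suminf]) (simp add: fun_eq_iff dd_def g_def)
  ultimately show ?thesis by linarith
qed

theorem mainTheorem6:
  shows "freq_hypercyclic_D_H2"
  unfolding freq_hypercyclic_D_H2_def
proof (intro exI[of _ "FF (gg 0)"] conjI allI impI)
  show "FF (gg 0) \<in> Edom" by (rule gg_Edom)
next
  fix n :: nat assume "n \<ge> 1"
  show "(Dop ^^ n) (FF (gg 0)) \<in> Edom" by (simp add: orbit gg_Edom)
next
  fix U assume H: "h2_open U \<and> U \<noteq> {}"
  then obtain x where xU: "x \<in> U" by auto
  have UH: "U \<subseteq> H2" using H by (simp add: h2_open_def)
  obtain e where e: "e > 0" and eU: "\<forall>y\<in>H2. h2_dist x y < e \<longrightarrow> y \<in> U"
    using H xU unfolding h2_open_def by blast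
  have xH: "x \<in> H2" using xU UH by auto
  define a where "a = taylor_coeff x"
  have xF: "x = FF (Abs_fps a)" and rA: "fps_conv_radius (Abs_fps a) \<ge> 1"
    and sa: "summable (\<lambda>n. (cmod (a n))\<^sup>2)"
    using H2_rep[OF xH] by (simp_all add: a_def)
  obtain j where A: "(\<Sum>k<KK j. (cmod (a k - bc j k))\<^sup>2) < e\<^sup>2/8"
    and B: "(\<Sum>k. (cmod (a (k + KK j)))\<^sup>2) < e\<^sup>2/8" and C: "8 * (1/2)^(KK j) < e\<^sup>2/2"
    using approx[OF sa e] by blast
  show "lower_density {n. n \<ge> 1 \<and> (Dop ^^ n) (FF (gg 0)) \<in> U} > 0"
  proof (rule density[of j])
    fix t assume tj: "v2 (Suc t) = vj j"
    define m where "m = pos t + GG j"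
    have m1: "m \<ge> 1" by (simp add: m_def GG_def)
    have "h2_dist x (FF (gg m)) = sqrt (\<Sum>k. (cmod (a k - cc (m + k) / fact k))\<^sup>2)"
      using dist_FF[OF rA gg_radius[of m]] xF by (simp add: gg_nth)
    also have "\<dots> < sqrt (e\<^sup>2)"
      by (rule real_sqrt_less_mono) (use err_sum[OF sa tj A B C] in \<open>simp add: m_def\<close>)
    also have "\<dots> = e" using e by simp
    finally have "FF (gg m) \<in> U" using eU gg_H2[of m] by blast
    thus "pos t + GG j \<in> {n. n \<ge> 1 \<and> (Dop ^^ n) (FF (gg 0)) \<in> U}"
      using m1 by (simp add: m_def orbit)
  qed
qed

end
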